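(* Let $X,Y\subseteq\mathbb{R}$ with $|X|=|Y|=\mathfrak{c}$ and $|X\setminus Y|=\mathfrak{c}$. Then $$\mathcal{B}_{f_X\oplus f_E^{\mathbb{R}\setminus X}}(\mathbb{R})\neq\mathcal{B}_{f_Y\oplus f_E^{\mathbb{R}\setminus Y}}(\mathbb{R}).$$
   Context: $\mathfrak{c}=|\mathbb{R}|$. For a set $Z$, a two-point selection on $Z$ is a map $f$ from the two-element subsets of $Z$ to $Z$ with $f(F)\in F$; write $r<_f s$ if $f(\{r,s\})=r$, and let $\tau_f$ be the topology on $Z$ generated (as a subbase) by all sets $\{x: x<_f r\}$ and $\{x: r<_f x\}$, $r\in Z$. For $Z\subseteq\mathbb{R}$ with $|Z|=\mathfrak{c}$, $f_Z$ denotes a two-point selection on $Z$ for which $\tau_{f_Z}$ is the discrete topology on $Z$. For $W\subseteq\mathbb{R}$, $f_E^W$ is the Euclidean selection on $W$: $f_E^W(\{r,s\})=\min\{r,s\}$. For a partition $\{P,Q\}$ of $\mathbb{R}$ and selections $f$ on $P$, $g$ on $Q$, the selection $f\oplus g$ on $\mathbb{R}$ is defined by $(f\oplus g)(\{x,y\})=x$ if $x\in P,y\in Q$; $=f(\{x,y\})$ if $x,y\in P$; $=g(\{x,y\})$ if $x,y\in Q$. For a selection $h$ on $\mathbb{R}$, $\mathcal{B}_h(\mathbb{R})$ is the $\sigma$-algebra generated by $\tau_h$. *)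

theory Defs
  imports "HOL-Analysis.Analysis" "HOL-Library.Equipollence"
begin

text \<open>A two-point selection on Z: a map f from the two-element subsets of Z
  (represented as a function on sets, only its values on such sets matter)
  with f F in F.\<close>
definition two_point_selection :: "real set \<Rightarrow> (real set \<Rightarrow> real) \<Rightarrow> bool" where
  "two_point_selection Z f \<longleftrightarrow>
     (\<forall>x\<in>Z. \<forall>y\<in>Z. x \<noteq> y \<longrightarrow> f {x, y} \<in> {x, y})"

definition sel_less :: "(real set \<Rightarrow> real) \<Rightarrow> real \<Rightarrow> real \<Rightarrow> bool" where
  "sel_less f r s \<longleftrightarrow> r \<noteq> s \<and> f {r, s} = r"

definition sel_subbase :: "real set \<Rightarrow> (real set \<Rightarrow> real) \<Rightarrow> real set set" where
  "sel_subbase Z f =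
     {{x \<in> Z. sel_less f x r} | r. r \<in> Z} \<union> {{x \<in> Z. sel_less f r x} | r. r \<in> Z}"

definition sel_topology :: "real set \<Rightarrow> (real set \<Rightarrow> real) \<Rightarrow> real topology" where
  "sel_topology Z f =
     topology (arbitrary union_of (finite intersection_of (\<lambda>S. S \<in> sel_subbase Z f) relative_to Z))"

definition euclid_sel :: "real set \<Rightarrow> real" where
  "euclid_sel F = Min F"

definition sel_sum :: "real set \<Rightarrow> (real set \<Rightarrow> real) \<Rightarrow> (real set \<Rightarrow> real) \<Rightarrow> real set \<Rightarrow> real" where
  "sel_sum P f g F =
     (if F \<subseteq> P then f F
      else if F \<subseteq> - P then g F
      else (THE x. x \<in> F \<and> x \<in> P))"

definition sel_borel :: "(real set \<Rightarrow> real) \<Rightarrow> real set set" where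
  "sel_borel h = sigma_sets UNIV {S. openin (sel_topology UNIV h) S}"

end

theory Submission
  imports Defs
begin

inductive Dc :: "(nat list \<Rightarrow> real) \<Rightarrow> real set \<Rightarrow> bool" where
  base: "t [] = 0 \<Longrightarrow> Dc t {..< t [0]}"
| emp: "t [] = 1 \<Longrightarrow> Dc t {}"
| cmp: "t [] = 2 \<Longrightarrow> Dc (\<lambda>l. t (0#l)) S \<Longrightarrow> Dc t (- S)"
| uni: "t [] = 3 \<Longrightarrow> (\<forall>n. Dc (\<lambda>l. t (n#l)) (S n)) \<Longrightarrow> Dc t (\<Union>n. S n)"

lemma Dc_fun: "Dc t S \<Longrightarrow> Dc t S' \<Longrightarrow> S = S'"
proof (induction arbitrary: S' rule: Dc.induct)
  case (base t)
  from base(2) show ?case by (cases rule: Dc.cases) (use base(1) in simp_all)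
next
  case (emp t)
  from emp(2) show ?case by (cases rule: Dc.cases) (use emp(1) in simp_all)
next
  case (cmp t S)
  from cmp.prems show ?case
  proof (cases rule: Dc.cases)
    case (cmp S2)
    then show ?thesis using cmp.IH by blast
  qed (use cmp(1) in simp_all)
next
  case (uni t S)
  from uni.prems show ?case
  proof (cases rule: Dc.cases)
    case (uni S2)
    have "S n = S2 n" for n using uni.IH uni(3) by blast
    then show ?thesis using uni(1) by simp
  qed (use uni(1) in simp_all)
qed

lemma Dc_sigma: "B \<in> sigma_sets UNIV (range lessThan) \<Longrightarrow> \<exists>t. Dc t B"
proof (induction rule: sigma_sets.induct)
  case (Basic a)
  then obtain r where a: "a = {..<r}" by auto
  define t0 where "t0 = (\<lambda>l::nat list. if l = [] then 0 else r)"
  have "Dc t0 {..< t0 [0]}" by (rule Dc.base) (simp add: t0_def)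
  then show ?case using a by (auto simp: t0_def)
next
  case Empty
  have "Dc (\<lambda>l. 1) {}" by (rule Dc.emp) simp
  then show ?case by blast
next
  case (Compl a)
  then obtain t where t: "Dc t a" by blast
  define t' where "t' = (\<lambda>l. case l of [] \<Rightarrow> 2 | n#l' \<Rightarrow> t l')"
  have "Dc t' (- a)" by (rule Dc.cmp) (use t in \<open>simp_all add: t'_def\<close>)
  then show ?case by (metis Compl_eq_Diff_UNIV)
next
  case (Union a)
  then obtain T where T: "\<And>i. Dc (T i) (a i)" by metis
  define t' where "t' = (\<lambda>l. case l of [] \<Rightarrow> 3 | n#l' \<Rightarrow> T n l')"
  have "Dc t' (\<Union>i. a i)" by (rule Dc.uni) (use T in \<open>simp_all add: t'_def\<close>)
  then show ?case by blast
qed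

lemma Dc_borel: "(B::real set) \<in> sets borel \<Longrightarrow> \<exists>t. Dc t B"
proof -
  have "sets (borel :: real measure) = sigma_sets UNIV (range lessThan)"
    by (subst borel_Iio) (rule sets_measure_of, simp)
  then show "B \<in> sets borel \<Longrightarrow> ?thesis" using Dc_sigma by simp
qed

lemma codes_lepoll: "(UNIV :: (nat list \<Rightarrow> real) set) \<lesssim> (UNIV :: real set)"
proof -
  obtain \<phi> :: "real \<Rightarrow> nat set" where phi: "inj \<phi>"
  proof -
    have "(UNIV :: real set) \<approx> (UNIV :: nat set set)" using nat_sets_eqpoll_reals eqpoll_sym by blast
    then obtain f :: "real \<Rightarrow> nat set" where "bij_betw f UNIV UNIV" unfolding eqpoll_def by blast
    then show ?thesis using that bij_betw_imp_inj_on by blast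
  qed
  define \<psi> where "\<psi> t = to_nat ` {(l, n). n \<in> \<phi> (t l)}" for t :: "nat list \<Rightarrow> real"
  have "inj \<psi>"
  proof (rule injI)
    fix t1 t2 assume "\<psi> t1 = \<psi> t2"
    then have "{(l, n). n \<in> \<phi> (t1 l)} = {(l, n). n \<in> \<phi> (t2 l)}"
      unfolding \<psi>_def by (simp add: inj_image_eq_iff)
    then have "\<phi> (t1 l) = \<phi> (t2 l)" for l by (auto simp: set_eq_iff)
    then show "t1 = t2" using phi by (auto simp: inj_def)
  qed
  then have "(UNIV :: (nat list \<Rightarrow> real) set) \<lesssim> (UNIV :: nat set set)"
    unfolding lepoll_def by blast
  then show ?thesis using nat_sets_eqpoll_reals eqpoll_imp_lepoll lepoll_trans by blast
qed

lemma ss_mixed: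
  assumes "x \<in> P" "y \<notin> P"
  shows "sel_sum P f g {x, y} = x" "sel_sum P f g {y, x} = x"
proof -
  have "(THE z. z \<in> {x, y} \<and> z \<in> P) = x" using assms by (intro the_equality) auto
  then show "sel_sum P f g {x, y} = x" using assms by (auto simp: sel_sum_def)
  then show "sel_sum P f g {y, x} = x" by (simp add: insert_commute)
qed

lemma ss_out:
  assumes "x \<notin> P" "y \<notin> P"
  shows "sel_sum P f euclid_sel {x, y} = min x y"
  using assms by (auto simp: sel_sum_def euclid_sel_def)

lemma ss_in:
  assumes "x \<in> P" "y \<in> P"
  shows "sel_sum P f g {x, y} = f {x, y}"
  using assms by (auto simp: sel_sum_def)

lemma sl_mixed:
  assumes "x \<in> P" "y \<notin> P"
  shows "sel_less (sel_sum P f g) x y" "\<not> sel_less (sel_sum P f g) y x"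
  using assms ss_mixed[OF assms, of f g] by (auto simp: sel_less_def)

lemma sl_out:
  assumes "x \<notin> P" "y \<notin> P"
  shows "sel_less (sel_sum P f euclid_sel) x y \<longleftrightarrow> x < y"
  using assms ss_out[OF assms, of f] by (auto simp: sel_less_def min_def)

lemma sl_in:
  assumes "x \<in> P" "y \<in> P"
  shows "sel_less (sel_sum P f g) x y \<longleftrightarrow> sel_less f x y"
  using assms ss_in[OF assms, of f g] by (auto simp: sel_less_def)

lemma openin_UNIV_iff:
  "openin (sel_topology UNIV h) S \<longleftrightarrow>
     (arbitrary union_of (finite intersection_of (\<lambda>S. S \<in> sel_subbase UNIV h))) S"
proof -
  have e: "(Q relative_to UNIV) = Q" for Q :: "real set \<Rightarrow> bool" by (rule ext) simp
  show ?thesis unfolding sel_topology_def e by (simp add: istopology_subbase_UNIV)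
qed

lemma subbase_trace:
  assumes "T \<in> sel_subbase UNIV (sel_sum P f euclid_sel)"
  shows "\<exists>V. open V \<and> T \<inter> -P = V \<inter> -P"
proof -
  let ?h = "sel_sum P f euclid_sel"
  from assms obtain r where "T = {x. sel_less ?h x r} \<or> T = {x. sel_less ?h r x}"
    unfolding sel_subbase_def by blast
  then show ?thesis
  proof
    assume T: "T = {x. sel_less ?h x r}"
    show ?thesis
    proof (cases "r \<in> P")
      case True
      have "\<And>x. x \<notin> P \<Longrightarrow> \<not> sel_less ?h x r" using sl_mixed(2)[OF True] by blast
      then have e: "T \<inter> -P = {} \<inter> -P" using T by blast
      show ?thesis by (rule exI[of _ "{}"]) (simp add: e)
    next
      case False
      have "\<And>x. x \<notin> P \<Longrightarrow> sel_less ?h x r \<longleftrightarrow> x < r" using sl_out[OF _ False] by blast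
      then have e: "T \<inter> -P = {..<r} \<inter> -P" using T by auto
      show ?thesis by (rule exI[of _ "{..<r}"]) (simp add: e)
    qed
  next
    assume T: "T = {x. sel_less ?h r x}"
    show ?thesis
    proof (cases "r \<in> P")
      case True
      have "\<And>x. x \<notin> P \<Longrightarrow> sel_less ?h r x" using sl_mixed(1)[OF True] by blast
      then have e: "T \<inter> -P = UNIV \<inter> -P" using T by blast
      show ?thesis by (rule exI[of _ "UNIV"]) (simp add: e)
    next
      case False
      have "\<And>x. x \<notin> P \<Longrightarrow> sel_less ?h r x \<longleftrightarrow> r < x" using sl_out[OF False] by blast
      then have e: "T \<inter> -P = {r<..} \<inter> -P" using T by auto
      show ?thesis by (rule exI[of _ "{r<..}"]) (simp add: e)
    qed
  qed
qed

lemma open_trace: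
  assumes "openin (sel_topology UNIV (sel_sum P f euclid_sel)) S"
  shows "\<exists>V. open V \<and> S \<inter> -P = V \<inter> -P"
proof -
  let ?h = "sel_sum P f euclid_sel"
  have fi: "\<exists>V. open V \<and> W \<inter> -P = V \<inter> -P"
    if "(finite intersection_of (\<lambda>S. S \<in> sel_subbase UNIV ?h)) W" for W
  proof -
    from that obtain \<U> where U: "finite \<U>" "\<forall>U\<in>\<U>. U \<in> sel_subbase UNIV ?h" "\<Inter>\<U> = W"
      unfolding intersection_of_def by auto
    then have "\<forall>U\<in>\<U>. \<exists>V. open V \<and> U \<inter> -P = V \<inter> -P" using subbase_trace by blast
    then obtain g where g: "\<forall>U\<in>\<U>. open (g U) \<and> U \<inter> -P = g U \<inter> -P" by metis
    have o: "open (\<Inter>(g ` \<U>))" using g U(1) by (intro open_Inter) auto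
    have e: "W \<inter> -P = \<Inter>(g ` \<U>) \<inter> -P" using g U(3) by blast
    show ?thesis by (rule exI[of _ "\<Inter>(g ` \<U>)"]) (simp only: o e)
  qed
  from assms obtain \<U> where U: "\<forall>U\<in>\<U>. (finite intersection_of (\<lambda>S. S \<in> sel_subbase UNIV ?h)) U"
     "\<Union>\<U> = S"
    unfolding openin_UNIV_iff union_of_def by auto
  then have "\<forall>U\<in>\<U>. \<exists>V. open V \<and> U \<inter> -P = V \<inter> -P" using fi by blast
  then obtain g where g: "\<forall>U\<in>\<U>. open (g U) \<and> U \<inter> -P = g U \<inter> -P" by metis
  have o: "open (\<Union>(g ` \<U>))" using g by auto
  have e: "S \<inter> -P = \<Union>(g ` \<U>) \<inter> -P" using g U(2) by blast
  show ?thesis by (rule exI[of _ "\<Union>(g ` \<U>)"]) (simp only: o e)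
qed

lemma borel_trace:
  assumes "S \<in> sel_borel (sel_sum P f euclid_sel)"
  shows "\<exists>B\<in>sets borel. S \<inter> -P = B \<inter> -P"
  using assms unfolding sel_borel_def
proof (induction rule: sigma_sets.induct)
  case (Basic a)
  then obtain V where "open V" "a \<inter> -P = V \<inter> -P" using open_trace[of P f a] by auto
  then show ?case by (intro bexI[of _ V]) auto
next
  case Empty
  show ?case by (intro bexI[of _ "{}"]) auto
next
  case (Compl a)
  then obtain B where "B \<in> sets borel" "a \<inter> -P = B \<inter> -P" by blast
  then show ?case by (intro bexI[of _ "-B"]) auto
next
  case (Union a)
  then obtain B where "\<And>i. B i \<in> sets borel \<and> a i \<inter> -P = B i \<inter> -P" by metis
  then show ?case by (intro bexI[of _ "\<Union>i. B i"]) auto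
qed

lemma subbase_openin:
  "T \<in> sel_subbase UNIV h \<Longrightarrow> openin (sel_topology UNIV h) T"
  unfolding openin_UNIV_iff by (intro arbitrary_union_of_inc finite_intersection_of_inc)

lemma singleton_open:
  assumes disc: "sel_topology P f = discrete_topology P"
    and x: "x \<in> P" "r \<in> P" "r \<noteq> x" "f {x, r} = x"
  shows "openin (sel_topology UNIV (sel_sum P f euclid_sel)) {x}"
proof -
  let ?h = "sel_sum P f euclid_sel"
  have "openin (sel_topology P f) {x}" using disc x by simp
  then have "(arbitrary union_of (finite intersection_of (\<lambda>S. S \<in> sel_subbase P f) relative_to P)) {x}"
    unfolding sel_topology_def by (simp add: istopology_subbase)
  then obtain \<V> where V: "\<forall>V\<in>\<V>. (finite intersection_of (\<lambda>S. S \<in> sel_subbase P f) relative_to P) V"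
    "\<Union>\<V> = {x}" unfolding union_of_def by auto
  then obtain W where W: "W \<in> \<V>" "x \<in> W" by auto
  have Wsub: "W \<subseteq> {x}" using V(2) W(1) by auto
  from V(1) W(1) obtain I where I: "(finite intersection_of (\<lambda>S. S \<in> sel_subbase P f)) I" "P \<inter> I = W"
    unfolding relative_to_def by blast
  then obtain \<U> where U: "finite \<U>" "\<forall>U\<in>\<U>. U \<in> sel_subbase P f" "\<Inter>\<U> = I"
    unfolding intersection_of_def by auto
  have "\<forall>U\<in>\<U>. \<exists>U'. U' \<in> sel_subbase UNIV ?h \<and> P \<inter> U = P \<inter> U'"
  proof
    fix U assume "U \<in> \<U>"
    then obtain s where s: "s \<in> P" "U = {z\<in>P. sel_less f z s} \<or> U = {z\<in>P. sel_less f s z}"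
      using U(2) unfolding sel_subbase_def by blast
    from s(2) show "\<exists>U'. U' \<in> sel_subbase UNIV ?h \<and> P \<inter> U = P \<inter> U'"
    proof
      assume U: "U = {z\<in>P. sel_less f z s}"
      have "\<And>z. z \<in> P \<Longrightarrow> sel_less ?h z s \<longleftrightarrow> sel_less f z s" using sl_in[OF _ s(1)] by blast
      then have e: "P \<inter> U = P \<inter> {z. sel_less ?h z s}" using U by auto
      have m: "{z. sel_less ?h z s} \<in> sel_subbase UNIV ?h" unfolding sel_subbase_def by blast
      show ?thesis by (rule exI[of _ "{z. sel_less ?h z s}"]) (simp only: e m simp_thms)
    next
      assume U: "U = {z\<in>P. sel_less f s z}"
      have "\<And>z. z \<in> P \<Longrightarrow> sel_less ?h s z \<longleftrightarrow> sel_less f s z" using sl_in[OF s(1)] by blast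
      then have e: "P \<inter> U = P \<inter> {z. sel_less ?h s z}" using U by auto
      have m: "{z. sel_less ?h s z} \<in> sel_subbase UNIV ?h" unfolding sel_subbase_def by blast
      show ?thesis by (rule exI[of _ "{z. sel_less ?h s z}"]) (simp only: e m simp_thms)
    qed
  qed
  then obtain g where g: "\<forall>U\<in>\<U>. g U \<in> sel_subbase UNIV ?h \<and> P \<inter> U = P \<inter> g U" by metis
  define R where "R = {z. sel_less ?h z r}"
  have "\<And>z. z \<notin> P \<Longrightarrow> \<not> sel_less ?h z r" using sl_mixed(2)[OF x(2)] by blast
  then have RP: "R \<subseteq> P" unfolding R_def by blast
  have xR: "x \<in> R" using sl_in[OF x(1) x(2), of f euclid_sel] x by (simp add: R_def sel_less_def)
  have eq: "{x} = \<Inter>(insert R (g ` \<U>))"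
  proof
    have "x \<in> P \<inter> I" using I(2) W(2) by blast
    then have "x \<in> P \<inter> g U" if "U \<in> \<U>" for U using g that U(3) by blast
    then show "{x} \<subseteq> \<Inter>(insert R (g ` \<U>))" using xR by blast
  next
    show "\<Inter>(insert R (g ` \<U>)) \<subseteq> {x}"
    proof
      fix z assume z: "z \<in> \<Inter>(insert R (g ` \<U>))"
      then have zP: "z \<in> P" using RP by blast
      have "z \<in> P \<inter> U" if "U \<in> \<U>" for U using g that z zP by blast
      then have "z \<in> P \<inter> I" using U(3) zP by blast
      then show "z \<in> {x}" using I(2) Wsub by blast
    qed
  qed
  have "openin (sel_topology UNIV ?h) (\<Inter>(insert R (g ` \<U>)))"
  proof (rule openin_Inter)
    show "finite (insert R (g ` \<U>))" using U(1) by simp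
    show "insert R (g ` \<U>) \<noteq> {}" by simp
    fix X assume "X \<in> insert R (g ` \<U>)"
    moreover have "R \<in> sel_subbase UNIV ?h" unfolding R_def sel_subbase_def by blast
    ultimately have "X \<in> sel_subbase UNIV ?h" using g by blast
    then show "openin (sel_topology UNIV ?h) X" by (rule subbase_openin)
  qed
  then show ?thesis using eq by simp
qed

theorem lemma3p5:
  fixes X Y :: "real set" and fX fY :: "real set \<Rightarrow> real"
  assumes "X \<approx> (UNIV :: real set)" and "Y \<approx> (UNIV :: real set)"
    and "X - Y \<approx> (UNIV :: real set)"
    and "two_point_selection X fX" and "sel_topology X fX = discrete_topology X"
    and "two_point_selection Y fY" and "sel_topology Y fY = discrete_topology Y"
  shows "sel_borel (sel_sum X fX euclid_sel) \<noteq> sel_borel (sel_sum Y fY euclid_sel)"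
proof
  assume eq: "sel_borel (sel_sum X fX euclid_sel) = sel_borel (sel_sum Y fY euclid_sel)"
  let ?hX = "sel_sum X fX euclid_sel"
  define G where "G = {x\<in>X. \<exists>r\<in>X. r \<noteq> x \<and> fX {x, r} = x}"
  have Gsub: "A \<in> sel_borel ?hX" if A: "A \<subseteq> G" for A
  proof -
    have op: "openin (sel_topology UNIV ?hX) {x}" if "x \<in> A" for x
    proof -
      from that A obtain r where "x \<in> X" "r \<in> X" "r \<noteq> x" "fX {x, r} = x" unfolding G_def by blast
      then show ?thesis by (rule singleton_open[OF assms(5)])
    qed
    have "openin (sel_topology UNIV ?hX) (\<Union>((\<lambda>x. {x}) ` A))"
      by (rule openin_Union) (use op in blast)
    moreover have "\<Union>((\<lambda>x. {x}) ` A) = A" by blast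
    ultimately have "openin (sel_topology UNIV ?hX) A" by simp
    then show ?thesis unfolding sel_borel_def by (intro sigma_sets.Basic) simp
  qed
  have uniq: "a = b" if "a \<in> X - G" "b \<in> X - G" for a b
  proof (rule ccontr)
    assume ne: "a \<noteq> b"
    have aX: "a \<in> X" and bX: "b \<in> X" using that by auto
    have na: "\<not> (\<exists>r\<in>X. r \<noteq> a \<and> fX {a, r} = a)" using that(1) aX unfolding G_def by simp
    have nb: "\<not> (\<exists>r\<in>X. r \<noteq> b \<and> fX {b, r} = b)" using that(2) bX unfolding G_def by simp
    have "fX {a, b} \<in> {a, b}" using assms(4) aX bX ne unfolding two_point_selection_def by simp
    moreover have "fX {a, b} \<noteq> a" using na bX ne by auto
    moreover have "fX {b, a} \<noteq> b" using nb aX ne by auto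
    ultimately show False by (simp add: insert_commute)
  qed
  define Z where "Z = (X - Y) \<inter> G"
  have ZY: "Z \<subseteq> -Y" unfolding Z_def by blast
  have infR: "infinite (UNIV :: real set)" by (simp add: infinite_UNIV_char_0)
  have inf: "infinite (X - Y)" using eqpoll_finite_iff[OF assms(3)] infR by blast
  have Zeq: "Z \<approx> (UNIV :: real set)"
  proof (cases "X - Y \<subseteq> G")
    case True
    then have "Z = X - Y" unfolding Z_def by blast
    then show ?thesis using assms(3) by simp
  next
    case False
    then obtain x0 where x0: "x0 \<in> X - Y" "x0 \<notin> G" by blast
    have Zd: "Z = (X - Y) - {x0}" unfolding Z_def using uniq x0 by blast
    then have ins: "insert x0 Z = X - Y" using x0 by blast
    have "infinite Z" using inf ins by (metis finite_insert)
    then have "insert x0 Z \<approx> Z" by (rule infinite_insert_eqpoll)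
    then have "Z \<approx> insert x0 Z" by (rule eqpoll_sym)
    then have "Z \<approx> X - Y" by (simp only: ins)
    then show ?thesis using assms(3) eqpoll_trans by blast
  qed
  have code: "\<exists>t B. Dc t B \<and> A = B \<inter> -Y" if "A \<in> Pow Z" for A
  proof -
    have "A \<subseteq> G" using that unfolding Z_def by blast
    then have "A \<in> sel_borel ?hX" by (rule Gsub)
    then have "A \<in> sel_borel (sel_sum Y fY euclid_sel)" by (simp only: eq)
    then have "\<exists>B\<in>sets borel. A \<inter> -Y = B \<inter> -Y" by (rule borel_trace)
    then obtain B where B: "B \<in> sets borel" "A \<inter> -Y = B \<inter> -Y" by blast
    have "A \<inter> -Y = A" using that ZY by blast
    then have AB: "A = B \<inter> -Y" using B(2) by simp
    obtain t where "Dc t B" using Dc_borel[OF B(1)] by blast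
    then show ?thesis using AB by blast
  qed
  define c where "c A = (SOME t. \<exists>B. Dc t B \<and> A = B \<inter> -Y)" for A
  have cprop: "\<exists>B. Dc (c A) B \<and> A = B \<inter> -Y" if "A \<in> Pow Z" for A
    unfolding c_def using code[OF that] by (rule someI_ex)
  have "inj_on c (Pow Z)"
  proof (rule inj_onI)
    fix A1 A2 assume a: "A1 \<in> Pow Z" "A2 \<in> Pow Z" "c A1 = c A2"
    obtain B1 where B1: "Dc (c A1) B1" "A1 = B1 \<inter> -Y" using cprop[OF a(1)] by blast
    obtain B2 where B2: "Dc (c A2) B2" "A2 = B2 \<inter> -Y" using cprop[OF a(2)] by blast
    have "Dc (c A1) B2" using B2(1) a(3) by simp
    then have "B1 = B2" using Dc_fun B1(1) by blast
    then show "A1 = A2" using B1(2) B2(2) by simp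
  qed
  then have "Pow Z \<lesssim> (UNIV :: (nat list \<Rightarrow> real) set)" unfolding lepoll_def by blast
  also have "\<dots> \<lesssim> (UNIV :: real set)" by (rule codes_lepoll)
  also have "(UNIV :: real set) \<lesssim> Z" using Zeq eqpoll_sym eqpoll_imp_lepoll by blast
  finally have "Pow Z \<lesssim> Z" .
  moreover have "Z \<prec> Pow Z" by (rule lesspoll_Pow_self)
  ultimately show False unfolding lesspoll_def using lepoll_antisym by blast
qed

end
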